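(* Let $(\boldsymbol X(t))_{t\in\mathbb Z}$ be a $d$-variate weakly stationary process with $\mathbb E\boldsymbol X(t)=0$, let $a,b\in\{1,\ldots,d\}$, and assume $\sum_{u=-\infty}^\infty|u||\gamma_{jj}(u)|<\infty$ for $j=a,b$. Let $n\in\mathbb N$ and $k\in\{0,\ldots,n-1\}$. Then $$d_{\mathrm W}\Big(\mathcal L\big(n^{1/2}(\tilde\gamma_{ab}(k)-\gamma_{ab}(k))\big),\mathcal L\big(n^{1/2}(\hat\gamma_{ab}(k)-\gamma_{ab}(k))\big)\Big)\le n^{-1/2}\Big(\sum_{u=-\infty}^\infty|\gamma_{aa}(u)|\Big)^{1/2}\Big(\sum_{u=-\infty}^\infty|\gamma_{bb}(u)|\Big)^{1/2}$$ $$+\frac{|k|}{n^{3/2}}\Big(\sum_{u=-\infty}^\infty|\gamma_{aa}(u)|+\frac1n\sum_{u=-\infty}^\infty|u||\gamma_{aa}(u)|\Big)^{1/2}\Big(\sum_{u=-\infty}^\infty|\gamma_{bb}(u)|+\frac1n\sum_{u=-\infty}^\infty|u||\gamma_{bb}(u)|\Big)^{1/2}.$$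
   Context: $\gamma_{ab}(k):=\mathbb E[X_a(t+k)X_b(t)]$. With $\bar X_j:=\frac1n\sum_{t=1}^nX_j(t)$, $\tilde\gamma_{ab}(k):=\frac1n\sum_{t=1}^{n-k}(X_a(t+k)-\bar X_a)(X_b(t)-\bar X_b)$ and $\hat\gamma_{ab}(k):=\frac1n\sum_{t=1}^{n-k}X_a(t+k)X_b(t)$. $d_{\mathrm W}(\mathcal L(U),\mathcal L(V)):=\sup_h|\mathbb Eh(U)-\mathbb Eh(V)|$ over all 1-Lipschitz $h:\mathbb R\to\mathbb R$. *)

theory Defs
  imports "HOL-Probability.Probability"
begin

definition weakly_stationary :: "'s measure \<Rightarrow> nat \<Rightarrow> (int \<Rightarrow> nat \<Rightarrow> 's \<Rightarrow> real) \<Rightarrow> bool" where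
  "weakly_stationary M d X \<longleftrightarrow>
     (\<forall>t. \<forall>j\<in>{1..d}. X t j \<in> borel_measurable M \<and> integrable M (\<lambda>\<omega>. (X t j \<omega>)\<^sup>2)) \<and>
     (\<forall>s t. \<forall>j\<in>{1..d}. integral\<^sup>L M (X s j) = integral\<^sup>L M (X t j)) \<and>
     (\<forall>s t k. \<forall>i\<in>{1..d}. \<forall>j\<in>{1..d}.
        integral\<^sup>L M (\<lambda>\<omega>. X (t + k) i \<omega> * X t j \<omega>) = integral\<^sup>L M (\<lambda>\<omega>. X (s + k) i \<omega> * X s j \<omega>))"

definition acov :: "'s measure \<Rightarrow> (int \<Rightarrow> nat \<Rightarrow> 's \<Rightarrow> real) \<Rightarrow> nat \<Rightarrow> nat \<Rightarrow> int \<Rightarrow> real" where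
  "acov M X a b k = integral\<^sup>L M (\<lambda>\<omega>. X k a \<omega> * X 0 b \<omega>)"

definition sample_mean :: "(int \<Rightarrow> nat \<Rightarrow> 's \<Rightarrow> real) \<Rightarrow> nat \<Rightarrow> nat \<Rightarrow> 's \<Rightarrow> real" where
  "sample_mean X n j \<omega> = (1 / real n) * (\<Sum>t=1..n. X (int t) j \<omega>)"

definition acov_tilde :: "(int \<Rightarrow> nat \<Rightarrow> 's \<Rightarrow> real) \<Rightarrow> nat \<Rightarrow> nat \<Rightarrow> nat \<Rightarrow> nat \<Rightarrow> 's \<Rightarrow> real" where
  "acov_tilde X n a b k \<omega> = (1 / real n) *
     (\<Sum>t=1..n-k. (X (int t + int k) a \<omega> - sample_mean X n a \<omega>) * (X (int t) b \<omega> - sample_mean X n b \<omega>))"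

definition acov_hat :: "(int \<Rightarrow> nat \<Rightarrow> 's \<Rightarrow> real) \<Rightarrow> nat \<Rightarrow> nat \<Rightarrow> nat \<Rightarrow> nat \<Rightarrow> 's \<Rightarrow> real" where
  "acov_hat X n a b k \<omega> = (1 / real n) * (\<Sum>t=1..n-k. X (int t + int k) a \<omega> * X (int t) b \<omega>)"

definition wasserstein :: "real measure \<Rightarrow> real measure \<Rightarrow> ereal" where
  "wasserstein \<mu> \<nu> = (SUP h\<in>{h :: real \<Rightarrow> real. 1-lipschitz_on UNIV h}.
       ereal \<bar>integral\<^sup>L \<mu> h - integral\<^sup>L \<nu> h\<bar>)"

end

theory Submission
  imports Defs
begin

lemma sqrt_bound_aux:
  fixes x p q :: real
  assumes p: "p \<ge> 0" and q: "q \<ge> 0" and H: "\<And>l. l > 0 \<Longrightarrow> x \<le> (l * p + q / l) / 2"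
  shows "x \<le> sqrt p * sqrt q"
proof (cases "p > 0 \<and> q > 0")
  case True
  define l where "l = sqrt q / sqrt p"
  have sp: "sqrt p > 0" "sqrt q > 0" using True by auto
  have lpos: "l > 0" using sp by (simp add: l_def)
  have "x \<le> (l * p + q / l) / 2" using H[OF lpos] .
  also have "l * p = sqrt p * sqrt q"
  proof -
    have "l * p = sqrt q / sqrt p * (sqrt p * sqrt p)" using p by (simp add: l_def)
    also have "\<dots> = sqrt p * sqrt q" using sp by (simp add: field_simps)
    finally show ?thesis .
  qed
  also have "q / l = sqrt p * sqrt q"
  proof -
    have "q / l = (sqrt q * sqrt q) / (sqrt q / sqrt p)" using q by (simp add: l_def)
    also have "\<dots> = sqrt p * sqrt q" using sp by (simp add: field_simps)
    finally show ?thesis .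
  qed
  finally show ?thesis by simp
next
  case False
  then have pq: "p = 0 \<or> q = 0" using p q by auto
  show ?thesis
  proof (rule ccontr)
    assume "\<not> ?thesis"
    then have xpos: "x > 0" using pq by auto
    show False
    proof (cases "p = 0")
      case True
      define l where "l = q / x + 1"
      have "q / x \<ge> 0" using xpos q by simp
      then have lpos: "l > 0" by (simp add: l_def)
      have "x \<le> q / l / 2" using H[OF lpos] True by simp
      moreover have "q / l / 2 \<le> q / l" using q lpos by (simp add: field_simps)
      moreover have "q / l < x" using xpos q lpos unfolding l_def by (simp add: field_simps)
      ultimately show False by linarith
    next
      case False
      then have q0: "q = 0" using pq by auto
      define l where "l = x / (p + 1)"
      have lpos: "l > 0" using xpos p by (simp add: l_def)
      have "x \<le> l * p / 2" using H[OF lpos] q0 by simp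
      moreover have "l * p / 2 \<le> l * p" using p lpos by simp
      moreover have "l * p < x" using xpos p unfolding l_def by (simp add: field_simps)
      ultimately show False by linarith
    qed
  qed
qed

definition sqi :: "'s measure \<Rightarrow> ('s \<Rightarrow> real) \<Rightarrow> bool" where
  "sqi M f \<longleftrightarrow> f \<in> borel_measurable M \<and> integrable M (\<lambda>x. (f x)\<^sup>2)"

lemma sqi_mult_integrable:
  assumes "sqi M f" "sqi M g"
  shows "integrable M (\<lambda>x. f x * g x)"
proof (rule Bochner_Integration.integrable_bound)
  show "integrable M (\<lambda>x. (f x)\<^sup>2 + (g x)\<^sup>2)" using assms by (auto simp: sqi_def)
  show "(\<lambda>x. f x * g x) \<in> borel_measurable M" using assms by (auto simp: sqi_def)
  show "AE x in M. norm (f x * g x) \<le> norm ((f x)\<^sup>2 + (g x)\<^sup>2)"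
  proof (rule AE_I2)
    fix x
    have "\<bar>f x * g x\<bar> \<le> (f x)\<^sup>2 + (g x)\<^sup>2"
    proof -
      have "0 \<le> (\<bar>f x\<bar> - \<bar>g x\<bar>)\<^sup>2" by simp
      then have "2 * (\<bar>f x\<bar> * \<bar>g x\<bar>) \<le> (f x)\<^sup>2 + (g x)\<^sup>2"
        by (simp add: power2_diff)
      moreover have "0 \<le> \<bar>f x\<bar> * \<bar>g x\<bar>" by simp
      ultimately have "\<bar>f x\<bar> * \<bar>g x\<bar> \<le> (f x)\<^sup>2 + (g x)\<^sup>2" by linarith
      then show ?thesis by (simp add: abs_mult)
    qed
    then show "norm (f x * g x) \<le> norm ((f x)\<^sup>2 + (g x)\<^sup>2)" by simp
  qed
qed

lemma sqi_cmult: "sqi M f \<Longrightarrow> sqi M (\<lambda>x. c * f x)"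
  by (auto simp: sqi_def power_mult_distrib)

lemma sqi_add:
  assumes "sqi M f" "sqi M g" shows "sqi M (\<lambda>x. f x + g x)"
proof -
  have "integrable M (\<lambda>x. (f x)\<^sup>2 + 2 * (f x * g x) + (g x)\<^sup>2)"
    using assms sqi_mult_integrable[OF assms] by (auto simp: sqi_def)
  then have "integrable M (\<lambda>x. (f x)\<^sup>2 + (g x)\<^sup>2 + 2 * (f x * g x))" by (simp add: ac_simps)
  moreover have "(\<lambda>x. f x + g x) \<in> borel_measurable M" using assms unfolding sqi_def
    by (auto intro: borel_measurable_add)
  ultimately show ?thesis using assms by (simp add: sqi_def power2_sum mult.assoc)
qed

lemma sqi_zero: "sqi M (\<lambda>x. 0)" by (simp add: sqi_def)

lemma sqi_sum: "(\<And>i. i \<in> I \<Longrightarrow> sqi M (f i)) \<Longrightarrow> sqi M (\<lambda>x. \<Sum>i\<in>I. f i x)"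
proof (induction I rule: infinite_finite_induct)
  case (insert i I)
  then show ?case using sqi_add[of M "f i" "\<lambda>x. \<Sum>i\<in>I. f i x"] by simp
qed (auto simp: sqi_zero)

lemma sqi_CS:
  assumes "sqi M f" "sqi M g"
  shows "integral\<^sup>L M (\<lambda>x. \<bar>f x * g x\<bar>) \<le> sqrt (integral\<^sup>L M (\<lambda>x. (f x)\<^sup>2)) * sqrt (integral\<^sup>L M (\<lambda>x. (g x)\<^sup>2))"
proof (rule sqrt_bound_aux)
  show "integral\<^sup>L M (\<lambda>x. (f x)\<^sup>2) \<ge> 0" "integral\<^sup>L M (\<lambda>x. (g x)\<^sup>2) \<ge> 0" by auto
  fix l :: real assume l: "l > 0"
  have i1: "integrable M (\<lambda>x. (f x)\<^sup>2)" "integrable M (\<lambda>x. (g x)\<^sup>2)" using assms by (auto simp: sqi_def)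
  have "integral\<^sup>L M (\<lambda>x. \<bar>f x * g x\<bar>) \<le> integral\<^sup>L M (\<lambda>x. (l * (f x)\<^sup>2 + (g x)\<^sup>2 / l) / 2)"
  proof (rule integral_mono)
    show "integrable M (\<lambda>x. \<bar>f x * g x\<bar>)" using sqi_mult_integrable[OF assms] by simp
    show "integrable M (\<lambda>x. (l * (f x)\<^sup>2 + (g x)\<^sup>2 / l) / 2)" using i1 by auto
    fix x
    have "0 \<le> (l * \<bar>f x\<bar> - \<bar>g x\<bar>)\<^sup>2" by simp
    then have "2 * l * \<bar>f x\<bar> * \<bar>g x\<bar> \<le> l\<^sup>2 * (f x)\<^sup>2 + (g x)\<^sup>2"
      by (simp add: power2_diff power_mult_distrib)
    moreover have "(l * (f x)\<^sup>2 + (g x)\<^sup>2 / l) / 2 = (l\<^sup>2 * (f x)\<^sup>2 + (g x)\<^sup>2) / (2 * l)"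
      using l by (simp add: field_simps power2_eq_square)
    ultimately show "\<bar>f x * g x\<bar> \<le> (l * (f x)\<^sup>2 + (g x)\<^sup>2 / l) / 2"
      using l by (simp add: pos_le_divide_eq abs_mult mult.commute mult.left_commute)
  qed
  also have "\<dots> = (l * integral\<^sup>L M (\<lambda>x. (f x)\<^sup>2) + integral\<^sup>L M (\<lambda>x. (g x)\<^sup>2) / l) / 2"
    using i1 by simp
  finally show "integral\<^sup>L M (\<lambda>x. \<bar>f x * g x\<bar>) \<le> (l * integral\<^sup>L M (\<lambda>x. (f x)\<^sup>2) + integral\<^sup>L M (\<lambda>x. (g x)\<^sup>2) / l) / 2" .
qed

lemma ws_sqi:
  assumes "weakly_stationary M d X" "j \<in> {1..d}"
  shows "sqi M (X t j)"
  using assms by (simp add: weakly_stationary_def sqi_def)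

lemma ws_cov:
  fixes X :: "int \<Rightarrow> nat \<Rightarrow> 's \<Rightarrow> real" and s t :: int
  assumes "weakly_stationary M d X" "j \<in> {1..d}"
  shows "integral\<^sup>L M (\<lambda>\<omega>. X s j \<omega> * X t j \<omega>) = acov M X j j (s - t)"
proof -
  have "integral\<^sup>L M (\<lambda>\<omega>. X (t + (s - t)) j \<omega> * X t j \<omega>) = integral\<^sup>L M (\<lambda>\<omega>. X (0 + (s - t)) j \<omega> * X 0 j \<omega>)"
  proof -
    have H: "\<forall>s t k. \<forall>i\<in>{1..d}. \<forall>j\<in>{1..d}.
        integral\<^sup>L M (\<lambda>\<omega>. X (t + k) i \<omega> * X t j \<omega>) = integral\<^sup>L M (\<lambda>\<omega>. X (s + k) i \<omega> * X s j \<omega>)"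
      using assms(1) unfolding weakly_stationary_def by (elim conjE) assumption
    show ?thesis using H assms(2) by blast
  qed
  then show ?thesis by (simp add: acov_def)
qed

lemma summable_abs_acov:
  fixes g :: "int \<Rightarrow> real"
  assumes "(\<lambda>u. \<bar>real_of_int u\<bar> * \<bar>g u\<bar>) summable_on UNIV"
  shows "(\<lambda>u. \<bar>g u\<bar>) summable_on UNIV"
proof -
  have "(\<lambda>u. \<bar>real_of_int u\<bar> * \<bar>g u\<bar>) summable_on (UNIV - {0})"
    by (rule summable_on_subset_banach[OF assms]) simp
  then have "(\<lambda>u. \<bar>g u\<bar>) summable_on (UNIV - {0})"
  proof (rule summable_on_comparison_test)
    fix u :: int assume "u \<in> UNIV - {0}"
    then have u1: "\<bar>real_of_int u\<bar> \<ge> 1" by auto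
    show "\<bar>g u\<bar> \<le> \<bar>real_of_int u\<bar> * \<bar>g u\<bar>"
      using mult_right_mono[OF u1 abs_ge_zero[of "g u"]] by simp
  qed simp
  then have "(\<lambda>u. \<bar>g u\<bar>) summable_on insert 0 (UNIV - {0})"
    by (simp only: summable_on_insert_iff)
  then show ?thesis by (simp add: insert_Diff_single)
qed

lemma var_bound:
  assumes M: "prob_space M" and ws: "weakly_stationary M d X" and j: "j \<in> {1..d}"
    and sm: "(\<lambda>u. \<bar>acov M X j j u\<bar>) summable_on UNIV"
    and I: "finite I" and w: "\<And>s. s \<in> I \<Longrightarrow> \<bar>w s\<bar> \<le> 1"
  shows "integral\<^sup>L M (\<lambda>\<omega>. (\<Sum>s\<in>I. w s * X (int s) j \<omega>)\<^sup>2)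
           \<le> (\<Sum>s\<in>I. \<bar>w s\<bar>) * (\<Sum>\<^sub>\<infinity>u. \<bar>acov M X j j u\<bar>)"
proof -
  let ?g = "\<lambda>u. acov M X j j u"
  let ?S = "\<Sum>\<^sub>\<infinity>u. \<bar>?g u\<bar>"
  have int: "integrable M (\<lambda>\<omega>. X (int s) j \<omega> * X (int t) j \<omega>)" for s t
    using sqi_mult_integrable[OF ws_sqi[OF ws j] ws_sqi[OF ws j]] .
  have eq: "(\<Sum>s\<in>I. w s * X (int s) j \<omega>)\<^sup>2
      = (\<Sum>s\<in>I. \<Sum>t\<in>I. (w s * w t) * (X (int s) j \<omega> * X (int t) j \<omega>))" for \<omega>
    unfolding power2_eq_square sum_product by (intro sum.cong refl) (simp add: mult_ac)
  have "integral\<^sup>L M (\<lambda>\<omega>. (\<Sum>s\<in>I. w s * X (int s) j \<omega>)\<^sup>2)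
      = (\<Sum>s\<in>I. integral\<^sup>L M (\<lambda>\<omega>. \<Sum>t\<in>I. (w s * w t) * (X (int s) j \<omega> * X (int t) j \<omega>)))"
    unfolding eq using Bochner_Integration.integral_sum[of I M "\<lambda>s \<omega>. \<Sum>t\<in>I. (w s * w t) * (X (int s) j \<omega> * X (int t) j \<omega>)"] int by auto
  also have "\<dots> = (\<Sum>s\<in>I. \<Sum>t\<in>I. integral\<^sup>L M (\<lambda>\<omega>. (w s * w t) * (X (int s) j \<omega> * X (int t) j \<omega>)))"
    by (intro sum.cong refl) (use Bochner_Integration.integral_sum int in auto)
  also have "\<dots> = (\<Sum>s\<in>I. \<Sum>t\<in>I. (w s * w t) * ?g (int s - int t))"
    by (intro sum.cong refl) (simp add: ws_cov[OF ws j])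
  also have "\<dots> \<le> (\<Sum>s\<in>I. \<Sum>t\<in>I. \<bar>w s\<bar> * \<bar>?g (int s - int t)\<bar>)"
  proof (intro sum_mono)
    fix s t assume st: "s \<in> I" "t \<in> I"
    have "(w s * w t) * ?g (int s - int t) \<le> \<bar>w s\<bar> * \<bar>w t\<bar> * \<bar>?g (int s - int t)\<bar>"
      using abs_ge_self[of "(w s * w t) * ?g (int s - int t)"] by (simp add: abs_mult)
    also have "\<dots> \<le> \<bar>w s\<bar> * 1 * \<bar>?g (int s - int t)\<bar>"
      using w[OF st(2)] by (intro mult_right_mono mult_left_mono) auto
    finally show "(w s * w t) * ?g (int s - int t) \<le> \<bar>w s\<bar> * \<bar>?g (int s - int t)\<bar>" by simp
  qed
  also have "\<dots> = (\<Sum>s\<in>I. \<bar>w s\<bar> * (\<Sum>t\<in>I. \<bar>?g (int s - int t)\<bar>))"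
    by (simp add: sum_distrib_left)
  also have "\<dots> \<le> (\<Sum>s\<in>I. \<bar>w s\<bar> * ?S)"
  proof (intro sum_mono mult_left_mono)
    fix s assume "s \<in> I"
    have inj: "inj_on (\<lambda>t. int s - int t) I" by (auto simp: inj_on_def)
    have "(\<Sum>t\<in>I. \<bar>?g (int s - int t)\<bar>) = (\<Sum>u\<in>(\<lambda>t. int s - int t) ` I. \<bar>?g u\<bar>)"
      using sum.reindex[OF inj, of "\<lambda>u. \<bar>?g u\<bar>"] by simp
    also have "\<dots> \<le> ?S"
      by (rule finite_sum_le_infsum[OF sm]) (use I in auto)
    finally show "(\<Sum>t\<in>I. \<bar>?g (int s - int t)\<bar>) \<le> ?S" .
  qed simp
  also have "\<dots> = (\<Sum>s\<in>I. \<bar>w s\<bar>) * ?S" by (simp add: sum_distrib_right)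
  finally show ?thesis .
qed

lemma sum_shift_aux:
  fixes f :: "nat \<Rightarrow> real"
  assumes "k \<le> n"
  shows "(\<Sum>t=1..n-k. f (t + k)) = (\<Sum>s\<in>{1..n}. (if s \<le> k then 0 else 1) * f s)"
proof -
  have "(\<Sum>s\<in>{1..n}. (if s \<le> k then 0 else 1) * f s) = (\<Sum>s\<in>{1..n}. if \<not> s \<le> k then f s else 0)"
    by (intro sum.cong) auto
  also have "\<dots> = sum f {s\<in>{1..n}. \<not> s \<le> k}" by (rule sum.inter_filter[symmetric]) simp
  also have "{s\<in>{1..n}. \<not> s \<le> k} = (\<lambda>t. t + k) ` {1..n-k}"
  proof
    show "{s \<in> {1..n}. \<not> s \<le> k} \<subseteq> (\<lambda>t. t + k) ` {1..n - k}"
    proof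
      fix s assume "s \<in> {s \<in> {1..n}. \<not> s \<le> k}"
      then have "s = (s - k) + k" "s - k \<in> {1..n-k}" by auto
      then show "s \<in> (\<lambda>t. t + k) ` {1..n - k}" by blast
    qed
  qed (use assms in auto)
  also have "sum f ((\<lambda>t. t + k) ` {1..n-k}) = (\<Sum>t=1..n-k. f (t + k))"
    by (subst sum.reindex) (auto simp: inj_on_def)
  finally show ?thesis by simp
qed

lemma sum_head_aux:
  fixes g :: "nat \<Rightarrow> real"
  assumes "k \<le> n"
  shows "(\<Sum>t=1..n-k. g t) = (\<Sum>s\<in>{1..n}. (if n - k < s then 0 else 1) * g s)"
proof -
  have "(\<Sum>s\<in>{1..n}. (if n - k < s then 0 else 1) * g s) = (\<Sum>s\<in>{1..n}. if \<not> n - k < s then g s else 0)"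
    by (intro sum.cong) auto
  also have "\<dots> = sum g {s\<in>{1..n}. \<not> n - k < s}" by (rule sum.inter_filter[symmetric]) simp
  also have "{s\<in>{1..n}. \<not> n - k < s} = {1..n-k}" using assms by auto
  finally show ?thesis by simp
qed

lemma alg_aux:
  fixes N K F G A B S :: real
  assumes "N > 0" "N + K > 0"
  shows "(1 / N) * (S - (1 / N) * G * (F - A) - (1 / N) * F * (G - B) + (N - K) * ((1 / N) * F) * ((1 / N) * G))
       - (1 / N) * S
     = (1 / N\<^sup>2) * (- ((N + K) / N) * (F - (N / (N + K)) * A) * (G - (N / (N + K)) * B) + (N / (N + K)) * A * B)"
proof -
  define r where "r = N / (N + K)"
  have r1: "(N + K) / N = 1 / r" using assms by (simp add: r_def)
  have rpos: "r > 0" using assms by (simp add: r_def)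
  have rhs: "- (1 / r) * (F - r * A) * (G - r * B) + r * A * B = - (1 / r) * F * G + F * B + A * G"
    using rpos by (simp add: field_simps)
  have lhs: "N * (S - (1 / N) * G * (F - A) - (1 / N) * F * (G - B) + (N - K) * ((1 / N) * F) * ((1 / N) * G)) - N * S
      = - ((N + K) / N) * F * G + F * B + A * G"
    using assms by (simp add: field_simps)
  have "(1 / N) * (S - (1 / N) * G * (F - A) - (1 / N) * F * (G - B) + (N - K) * ((1 / N) * F) * ((1 / N) * G))
       - (1 / N) * S = (1 / N\<^sup>2) * (N * (S - (1 / N) * G * (F - A) - (1 / N) * F * (G - B) + (N - K) * ((1 / N) * F) * ((1 / N) * G)) - N * S)"
    using assms by (simp add: field_simps power2_eq_square)
  also have "\<dots> = (1 / N\<^sup>2) * (- (1 / r) * (F - r * A) * (G - r * B) + r * A * B)"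
    unfolding lhs rhs r1 ..
  finally show ?thesis unfolding r_def r1[unfolded r_def] .
qed

lemma key_identity:
  fixes f g :: "nat \<Rightarrow> real" and n k :: nat
  assumes kn: "k < n"
  defines "P \<equiv> (\<Sum>s\<in>{1..n}. (if s \<le> k then real k / real (n + k) else 1) * f s)"
    and "Q \<equiv> (\<Sum>s\<in>{1..n}. (if n - k < s then real k / real (n + k) else 1) * g s)"
    and "A \<equiv> (\<Sum>s\<in>{1..n}. (if s \<le> k then 1 else 0) * f s)"
    and "B \<equiv> (\<Sum>s\<in>{1..n}. (if n - k < s then 1 else 0) * g s)"
  shows "(1 / real n) * (\<Sum>t=1..n-k. (f (t + k) - (1 / real n) * (\<Sum>t=1..n. f t)) * (g t - (1 / real n) * (\<Sum>t=1..n. g t)))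
       - (1 / real n) * (\<Sum>t=1..n-k. f (t + k) * g t)
     = (1 / (real n)\<^sup>2) * (- (real (n + k) / real n) * P * Q + (real n / real (n + k)) * A * B)"
proof -
  define F where "F = (\<Sum>t=1..n. f t)"
  define G where "G = (\<Sum>t=1..n. g t)"
  have npos: "real n > 0" using kn by simp
  have nkpos: "real (n + k) > 0" using kn by simp
  have nkpos': "real n + real k > 0" using kn by simp
  have c: "real k / real (n + k) = 1 - real n / real (n + k)" using nkpos by (simp add: field_simps)
  have i: "(\<Sum>t=1..n-k. f (t + k)) = F - A"
  proof -
    have "(\<Sum>t=1..n-k. f (t + k)) = (\<Sum>s\<in>{1..n}. f s - (if s \<le> k then 1 else 0) * f s)"
      unfolding sum_shift_aux[OF less_imp_le[OF kn]] by (intro sum.cong) auto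
    then show ?thesis by (simp add: F_def A_def sum_subtractf)
  qed
  have ii: "(\<Sum>t=1..n-k. g t) = G - B"
  proof -
    have "(\<Sum>t=1..n-k. g t) = (\<Sum>s\<in>{1..n}. g s - (if n - k < s then 1 else 0) * g s)"
      unfolding sum_head_aux[OF less_imp_le[OF kn]] by (intro sum.cong) auto
    then show ?thesis by (simp add: G_def B_def sum_subtractf)
  qed
  have iii: "P = F - (real n / real (n + k)) * A"
  proof -
    have "P = (\<Sum>s\<in>{1..n}. f s - (real n / real (n + k)) * ((if s \<le> k then 1 else 0) * f s))"
      unfolding P_def
    proof (intro sum.cong refl)
      fix s show "(if s \<le> k then real k / real (n + k) else 1) * f s = f s - real n / real (n + k) * ((if s \<le> k then 1 else 0) * f s)"
        unfolding c by (cases "s \<le> k") (simp_all add: algebra_simps)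
    qed
    then show ?thesis by (simp add: F_def A_def sum_subtractf sum_distrib_left)
  qed
  have iv: "Q = G - (real n / real (n + k)) * B"
  proof -
    have "Q = (\<Sum>s\<in>{1..n}. g s - (real n / real (n + k)) * ((if n - k < s then 1 else 0) * g s))"
      unfolding Q_def
    proof (intro sum.cong refl)
      fix s show "(if n - k < s then real k / real (n + k) else 1) * g s = g s - real n / real (n + k) * ((if n - k < s then 1 else 0) * g s)"
        unfolding c by (cases "n - k < s") (simp_all add: algebra_simps)
    qed
    then show ?thesis by (simp add: G_def B_def sum_subtractf sum_distrib_left)
  qed
  have exp: "(\<Sum>t=1..n-k. (f (t + k) - (1 / real n) * F) * (g t - (1 / real n) * G))
      = (\<Sum>t=1..n-k. f (t + k) * g t) - (1 / real n) * G * (\<Sum>t=1..n-k. f (t + k))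
        - (1 / real n) * F * (\<Sum>t=1..n-k. g t) + real (n - k) * ((1 / real n) * F) * ((1 / real n) * G)"
    by (simp add: algebra_simps sum_subtractf sum.distrib sum_distrib_left sum_distrib_right)
  have nk: "real (n - k) = real n - real k" using kn by simp
  show ?thesis
    unfolding F_def[symmetric] G_def[symmetric] exp i ii iii iv nk of_nat_add
    by (rule alg_aux) (use npos nkpos in auto)
qed

lemma powr_three_halves:
  assumes "x > 0" shows "x powr (3/2) = x * sqrt x"
proof -
  have "x powr (3/2) = x powr (1 + 1/2)" by simp
  also have "\<dots> = x powr 1 * x powr (1/2)" by (rule powr_add)
  also have "\<dots> = x * sqrt x" using assms by (simp add: powr_half_sqrt)
  finally show ?thesis .
qed

lemma final_arith:
  fixes n k :: nat and Sa Sb Ta Tb EP EQ EA EB x :: real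
  assumes kn: "k < n" and s: "Sa \<ge> 0" "Sb \<ge> 0" "Ta \<ge> 0" "Tb \<ge> 0"
    and e0: "EP \<ge> 0" "EQ \<ge> 0" "EA \<ge> 0" "EB \<ge> 0"
    and eP: "EP \<le> (real n)\<^sup>2 / real (n + k) * Sa" and eQ: "EQ \<le> (real n)\<^sup>2 / real (n + k) * Sb"
    and eA: "EA \<le> real k * Sa" and eB: "EB \<le> real k * Sb"
    and x: "x \<le> sqrt (real n) * (1 / (real n)\<^sup>2) * (real (n + k) / real n) * (sqrt EP * sqrt EQ)
                 + sqrt (real n) * (1 / (real n)\<^sup>2) * (real n / real (n + k)) * (sqrt EA * sqrt EB)"
  shows "x \<le> 1 / sqrt (real n) * sqrt Sa * sqrt Sb
      + real k / real n powr (3/2) * sqrt (Sa + 1 / real n * Ta) * sqrt (Sb + 1 / real n * Tb)"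
proof -
  have npos: "real n > 0" using kn by simp
  have nk: "real (n + k) > 0" using kn by simp
  define c where "c = (real n)\<^sup>2 / real (n + k)"
  have c0: "c \<ge> 0" by (simp add: c_def)
  have h1: "sqrt EP * sqrt EQ \<le> sqrt (c * Sa) * sqrt (c * Sb)"
    using eP eQ e0 unfolding c_def by (intro mult_mono real_sqrt_le_mono) auto
  also have "\<dots> = c * (sqrt Sa * sqrt Sb)" using c0 by (simp add: real_sqrt_mult)
  finally have h1: "sqrt EP * sqrt EQ \<le> c * (sqrt Sa * sqrt Sb)" .
  have h2: "sqrt EA * sqrt EB \<le> sqrt (real k * Sa) * sqrt (real k * Sb)"
    using eA eB e0 by (intro mult_mono real_sqrt_le_mono) auto
  also have "\<dots> = real k * (sqrt Sa * sqrt Sb)" by (simp add: real_sqrt_mult)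
  finally have h2: "sqrt EA * sqrt EB \<le> real k * (sqrt Sa * sqrt Sb)" .
  have c1pos: "sqrt (real n) * (1 / (real n)\<^sup>2) \<ge> 0" by simp
  have t1: "sqrt (real n) * (1 / (real n)\<^sup>2) * (real (n + k) / real n) * (sqrt EP * sqrt EQ)
      \<le> sqrt (real n) * (1 / (real n)\<^sup>2) * (real (n + k) / real n) * (c * (sqrt Sa * sqrt Sb))"
    by (intro mult_left_mono h1) auto
  have t1': "sqrt (real n) * (1 / (real n)\<^sup>2) * (real (n + k) / real n) * c = 1 / sqrt (real n)"
  proof -
    have q: "(1 / (real n)\<^sup>2) * (real (n + k) / real n) * c = 1 / real n"
    proof -
      have "(1 / (real n)\<^sup>2) * (real (n + k) / real n) * c = (real (n + k) / real (n + k)) * ((real n)\<^sup>2 / (real n)\<^sup>2) * (1 / real n)"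
        unfolding c_def by (simp only: times_divide_times_eq mult_1 mult_1_right mult_ac)
      also have "\<dots> = 1 / real n" using npos nk by simp
      finally show ?thesis .
    qed
    have "sqrt (real n) * (1 / (real n)\<^sup>2) * (real (n + k) / real n) * c
        = sqrt (real n) * ((1 / (real n)\<^sup>2) * (real (n + k) / real n) * c)" by (simp only: mult.assoc)
    also have "\<dots> = sqrt (real n) / real n" unfolding q by simp
    finally have "sqrt (real n) * (1 / (real n)\<^sup>2) * (real (n + k) / real n) * c = sqrt (real n) / real n" .
    also have "\<dots> = 1 / sqrt (real n)" using npos
      by (metis real_div_sqrt less_imp_le div_by_1 divide_divide_eq_right mult_1)
    finally show ?thesis .
  qed
  have t2: "sqrt (real n) * (1 / (real n)\<^sup>2) * (real n / real (n + k)) * (sqrt EA * sqrt EB)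
      \<le> sqrt (real n) * (1 / (real n)\<^sup>2) * (real n / real (n + k)) * (real k * (sqrt Sa * sqrt Sb))"
    by (intro mult_left_mono h2) auto
  have t2': "sqrt (real n) * (1 / (real n)\<^sup>2) * (real n / real (n + k)) * real k \<le> real k / real n powr (3/2)"
  proof -
    have sn: "sqrt (real n) * sqrt (real n) = real n" using npos by simp
    have snp: "sqrt (real n) > 0" using npos by simp
    have "sqrt (real n) * (1 / (real n)\<^sup>2) * (real n / real (n + k)) * real k
        = (real k * sqrt (real n) * real n) / ((real n * real (n + k)) * real n)"
      by (simp add: divide_inverse power2_eq_square mult_ac inverse_mult_distrib)
    also have "\<dots> = real k * sqrt (real n) / (real n * real (n + k))"
      using npos by simp
    also have "\<dots> \<le> real k * sqrt (real n) / (real n * real n)"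
      using npos nk by (intro divide_left_mono mult_left_mono) auto
    also have "\<dots> = real k / (real n * sqrt (real n))"
      using npos snp sn by (simp add: field_simps)
    also have "\<dots> = real k / real n powr (3/2)" using powr_three_halves[OF npos] by simp
    finally show ?thesis .
  qed
  have sq: "sqrt Sa * sqrt Sb \<le> sqrt (Sa + 1 / real n * Ta) * sqrt (Sb + 1 / real n * Tb)"
    using s npos by (intro mult_mono real_sqrt_le_mono) auto
  define K1 where "K1 = sqrt (real n) * (1 / (real n)\<^sup>2) * (real (n + k) / real n)"
  define K2 where "K2 = sqrt (real n) * (1 / (real n)\<^sup>2) * (real n / real (n + k))"
  define ss where "ss = sqrt Sa * sqrt Sb"
  have a1: "K1 * (c * ss) = 1 / sqrt (real n) * ss" using t1' unfolding K1_def by (simp only: mult.assoc[symmetric])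
  have a2: "K2 * (real k * ss) = (K2 * real k) * ss" by (simp only: mult.assoc)
  have "x \<le> 1 / sqrt (real n) * (sqrt Sa * sqrt Sb)
      + (sqrt (real n) * (1 / (real n)\<^sup>2) * (real n / real (n + k)) * real k) * (sqrt Sa * sqrt Sb)"
    using x t1 t2 a1 a2 unfolding K1_def[symmetric] K2_def[symmetric] ss_def[symmetric] by linarith
  also have "\<dots> \<le> 1 / sqrt (real n) * (sqrt Sa * sqrt Sb)
      + (real k / real n powr (3/2)) * (sqrt (Sa + 1 / real n * Ta) * sqrt (Sb + 1 / real n * Tb))"
    using t2' sq s by (intro add_left_mono mult_mono) auto
  finally show ?thesis by (simp add: mult.assoc)
qed

lemma sum_if_card:
  fixes c d :: real
  assumes "finite I" "J \<subseteq> I"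
  shows "(\<Sum>s\<in>I. if s \<in> J then c else d) = real (card J) * c + real (card I - card J) * d"
proof -
  have fJ: "finite J" using assms finite_subset by blast
  have "(\<Sum>s\<in>I. if s \<in> J then c else d) = sum (\<lambda>_. c) (I \<inter> {x. x \<in> J}) + sum (\<lambda>_. d) (I \<inter> - {x. x \<in> J})"
    by (rule sum.If_cases[OF assms(1)])
  also have "I \<inter> {x. x \<in> J} = J" using assms by auto
  also have "I \<inter> - {x. x \<in> J} = I - J" by auto
  finally show ?thesis using assms card_Diff_subset[OF fJ assms(2)] by simp
qed

lemma sum_u:
  assumes kn: "k < n"
  shows "(\<Sum>s\<in>{1..n}. \<bar>if s \<le> k then real k / real (n + k) else 1\<bar>) = (real n)\<^sup>2 / real (n + k)"
proof -
  have "(\<Sum>s\<in>{1..n}. \<bar>if s \<le> k then real k / real (n + k) else 1\<bar>)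
      = (\<Sum>s\<in>{1..n}. if s \<in> {1..k} then real k / real (n + k) else 1)"
    by (intro sum.cong) auto
  also have "\<dots> = real (card {1..k}) * (real k / real (n + k)) + real (card {1..n} - card {1..k}) * 1"
    using kn by (intro sum_if_card) auto
  also have "\<dots> = real k * (real k / real (n + k)) + (real n - real k)" using kn by simp
  also have "\<dots> = (real n)\<^sup>2 / real (n + k)"
    using kn by (simp add: field_simps power2_eq_square)
  finally show ?thesis .
qed

lemma sum_v:
  assumes kn: "k < n"
  shows "(\<Sum>s\<in>{1..n}. \<bar>if n - k < s then real k / real (n + k) else 1\<bar>) = (real n)\<^sup>2 / real (n + k)"
proof -
  have "(\<Sum>s\<in>{1..n}. \<bar>if n - k < s then real k / real (n + k) else 1\<bar>)
      = (\<Sum>s\<in>{1..n}. if s \<in> {n-k+1..n} then real k / real (n + k) else 1)"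
    by (intro sum.cong) auto
  also have "\<dots> = real (card {n-k+1..n}) * (real k / real (n + k)) + real (card {1..n} - card {n-k+1..n}) * 1"
    using kn by (intro sum_if_card) auto
  also have "\<dots> = real k * (real k / real (n + k)) + (real n - real k)" using kn by simp
  also have "\<dots> = (real n)\<^sup>2 / real (n + k)"
    using kn by (simp add: field_simps power2_eq_square)
  finally show ?thesis .
qed

lemma sum_ia:
  assumes kn: "k < n"
  shows "(\<Sum>s\<in>{1..n}. \<bar>if s \<le> k then 1 else (0::real)\<bar>) = real k"
proof -
  have "(\<Sum>s\<in>{1..n}. \<bar>if s \<le> k then 1 else (0::real)\<bar>) = (\<Sum>s\<in>{1..n}. if s \<in> {1..k} then 1 else (0::real))"
    by (intro sum.cong) auto
  also have "\<dots> = real (card {1..k}) * 1 + real (card {1..n} - card {1..k}) * 0"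
    using kn by (intro sum_if_card) auto
  finally show ?thesis by simp
qed

lemma sum_ib:
  assumes kn: "k < n"
  shows "(\<Sum>s\<in>{1..n}. \<bar>if n - k < s then 1 else (0::real)\<bar>) = real k"
proof -
  have "(\<Sum>s\<in>{1..n}. \<bar>if n - k < s then 1 else (0::real)\<bar>) = (\<Sum>s\<in>{1..n}. if s \<in> {n-k+1..n} then 1 else (0::real))"
    by (intro sum.cong) auto
  also have "\<dots> = real (card {n-k+1..n}) * 1 + real (card {1..n} - card {n-k+1..n}) * 0"
    using kn by (intro sum_if_card) auto
  finally show ?thesis using kn by simp
qed

theorem lemmaC1:
  fixes M :: "'s measure" and d :: nat and X :: "int \<Rightarrow> nat \<Rightarrow> 's \<Rightarrow> real"
    and a b n k :: nat
  assumes "prob_space M"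
    and "weakly_stationary M d X"
    and "\<And>t j. j \<in> {1..d} \<Longrightarrow> integral\<^sup>L M (X t j) = 0"
    and "a \<in> {1..d}" and "b \<in> {1..d}"
    and "(\<lambda>u. \<bar>real_of_int u\<bar> * \<bar>acov M X a a u\<bar>) summable_on UNIV"
    and "(\<lambda>u. \<bar>real_of_int u\<bar> * \<bar>acov M X b b u\<bar>) summable_on UNIV"
    and "k < n"
  shows "wasserstein
      (distr M borel (\<lambda>\<omega>. sqrt (real n) * (acov_tilde X n a b k \<omega> - acov M X a b (int k))))
      (distr M borel (\<lambda>\<omega>. sqrt (real n) * (acov_hat X n a b k \<omega> - acov M X a b (int k))))
    \<le> ereal (
        1 / sqrt (real n) * sqrt (\<Sum>\<^sub>\<infinity>u. \<bar>acov M X a a u\<bar>) * sqrt (\<Sum>\<^sub>\<infinity>u. \<bar>acov M X b b u\<bar>)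
      + real k / real n powr (3/2)
        * sqrt ((\<Sum>\<^sub>\<infinity>u. \<bar>acov M X a a u\<bar>) + 1 / real n * (\<Sum>\<^sub>\<infinity>u. \<bar>real_of_int u\<bar> * \<bar>acov M X a a u\<bar>))
        * sqrt ((\<Sum>\<^sub>\<infinity>u. \<bar>acov M X b b u\<bar>) + 1 / real n * (\<Sum>\<^sub>\<infinity>u. \<bar>real_of_int u\<bar> * \<bar>acov M X b b u\<bar>)))"
proof -
  interpret prob_space M by (rule assms(1))
  note ws = assms(2) and a = assms(4) and b = assms(5) and kn = assms(8)
  have npos: "real n > 0" using kn by simp
  have sma: "(\<lambda>u. \<bar>acov M X a a u\<bar>) summable_on UNIV" using summable_abs_acov[OF assms(6)] .
  have smb: "(\<lambda>u. \<bar>acov M X b b u\<bar>) summable_on UNIV" using summable_abs_acov[OF assms(7)] .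
  define Sa where "Sa = (\<Sum>\<^sub>\<infinity>u. \<bar>acov M X a a u\<bar>)"
  define Sb where "Sb = (\<Sum>\<^sub>\<infinity>u. \<bar>acov M X b b u\<bar>)"
  define Ta where "Ta = (\<Sum>\<^sub>\<infinity>u. \<bar>real_of_int u\<bar> * \<bar>acov M X a a u\<bar>)"
  define Tb where "Tb = (\<Sum>\<^sub>\<infinity>u. \<bar>real_of_int u\<bar> * \<bar>acov M X b b u\<bar>)"
  have Sa0: "Sa \<ge> 0" unfolding Sa_def by (rule infsum_nonneg) simp
  have Sb0: "Sb \<ge> 0" unfolding Sb_def by (rule infsum_nonneg) simp
  have Ta0: "Ta \<ge> 0" unfolding Ta_def by (rule infsum_nonneg) simp
  have Tb0: "Tb \<ge> 0" unfolding Tb_def by (rule infsum_nonneg) simp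
  define u where "u = (\<lambda>s::nat. if s \<le> k then real k / real (n + k) else 1)"
  define v where "v = (\<lambda>s::nat. if n - k < s then real k / real (n + k) else 1)"
  define ia where "ia = (\<lambda>s::nat. if s \<le> k then 1 else (0::real))"
  define ib where "ib = (\<lambda>s::nat. if n - k < s then 1 else (0::real))"
  define P where "P = (\<lambda>\<omega>. \<Sum>s\<in>{1..n}. u s * X (int s) a \<omega>)"
  define Q where "Q = (\<lambda>\<omega>. \<Sum>s\<in>{1..n}. v s * X (int s) b \<omega>)"
  define A where "A = (\<lambda>\<omega>. \<Sum>s\<in>{1..n}. ia s * X (int s) a \<omega>)"
  define B where "B = (\<lambda>\<omega>. \<Sum>s\<in>{1..n}. ib s * X (int s) b \<omega>)"
  define c1 where "c1 = sqrt (real n) * (1 / (real n)\<^sup>2)"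
  define \<alpha> where "\<alpha> = real (n + k) / real n"
  define \<beta> where "\<beta> = real n / real (n + k)"
  define U where "U = (\<lambda>\<omega>. sqrt (real n) * (acov_tilde X n a b k \<omega> - acov M X a b (int k)))"
  define V where "V = (\<lambda>\<omega>. sqrt (real n) * (acov_hat X n a b k \<omega> - acov M X a b (int k)))"
  have diff: "U \<omega> - V \<omega> = c1 * (- \<alpha> * P \<omega> * Q \<omega> + \<beta> * A \<omega> * B \<omega>)" for \<omega>
  proof -
    have "acov_tilde X n a b k \<omega> - acov_hat X n a b k \<omega> = (1 / (real n)\<^sup>2) * (- \<alpha> * P \<omega> * Q \<omega> + \<beta> * A \<omega> * B \<omega>)"
      using key_identity[OF kn, of "\<lambda>s. X (int s) a \<omega>" "\<lambda>s. X (int s) b \<omega>"]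
      unfolding acov_tilde_def acov_hat_def sample_mean_def P_def Q_def A_def B_def u_def v_def ia_def ib_def \<alpha>_def \<beta>_def
      by simp
    moreover have "U \<omega> - V \<omega> = sqrt (real n) * (acov_tilde X n a b k \<omega> - acov_hat X n a b k \<omega>)"
      unfolding U_def V_def by (simp add: algebra_simps)
    ultimately show ?thesis unfolding c1_def by (simp only: mult.assoc)
  qed
  have sXa: "\<And>t. sqi M (X t a)" using ws_sqi[OF ws a] .
  have sXb: "\<And>t. sqi M (X t b)" using ws_sqi[OF ws b] .
  have sP: "sqi M P" unfolding P_def by (intro sqi_sum sqi_cmult sXa)
  have sQ: "sqi M Q" unfolding Q_def by (intro sqi_sum sqi_cmult sXb)
  have sA: "sqi M A" unfolding A_def by (intro sqi_sum sqi_cmult sXa)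
  have sB: "sqi M B" unfolding B_def by (intro sqi_sum sqi_cmult sXb)
  have intPQ: "integrable M (\<lambda>\<omega>. P \<omega> * Q \<omega>)" by (rule sqi_mult_integrable[OF sP sQ])
  have intAB: "integrable M (\<lambda>\<omega>. A \<omega> * B \<omega>)" by (rule sqi_mult_integrable[OF sA sB])
  have diff': "U \<omega> - V \<omega> = c1 * ((- \<alpha>) * (P \<omega> * Q \<omega>) + \<beta> * (A \<omega> * B \<omega>))" for \<omega>
    unfolding diff by (simp only: mult.assoc)
  have intD: "integrable M (\<lambda>\<omega>. U \<omega> - V \<omega>)"
    unfolding diff' using intPQ intAB by (intro integrable_mult_right Bochner_Integration.integrable_add) auto
  have "integrable M (\<lambda>\<omega>. acov_hat X n a b k \<omega>)" unfolding acov_hat_def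
    by (intro integrable_mult_right Bochner_Integration.integrable_sum sqi_mult_integrable sXa sXb)
  then have intV: "integrable M V" unfolding V_def
    by (intro integrable_mult_right Bochner_Integration.integrable_diff) auto
  have intU: "integrable M U"
  proof -
    have "integrable M (\<lambda>\<omega>. V \<omega> + (U \<omega> - V \<omega>))" by (rule Bochner_Integration.integrable_add[OF intV intD])
    then show ?thesis by simp
  qed
  have Um: "U \<in> borel_measurable M" using intU by (rule borel_measurable_integrable)
  have Vm: "V \<in> borel_measurable M" using intV by (rule borel_measurable_integrable)
  have EP: "integral\<^sup>L M (\<lambda>\<omega>. (P \<omega>)\<^sup>2) \<le> (real n)\<^sup>2 / real (n + k) * Sa"
  proof -
    have "integral\<^sup>L M (\<lambda>\<omega>. (P \<omega>)\<^sup>2) \<le> (\<Sum>s\<in>{1..n}. \<bar>u s\<bar>) * Sa"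
      unfolding P_def Sa_def by (rule var_bound[OF assms(1) ws a sma]) (auto simp: u_def)
    also have "(\<Sum>s\<in>{1..n}. \<bar>u s\<bar>) = (real n)\<^sup>2 / real (n + k)" unfolding u_def by (rule sum_u[OF kn])
    finally show ?thesis .
  qed
  have EQ: "integral\<^sup>L M (\<lambda>\<omega>. (Q \<omega>)\<^sup>2) \<le> (real n)\<^sup>2 / real (n + k) * Sb"
  proof -
    have "integral\<^sup>L M (\<lambda>\<omega>. (Q \<omega>)\<^sup>2) \<le> (\<Sum>s\<in>{1..n}. \<bar>v s\<bar>) * Sb"
      unfolding Q_def Sb_def by (rule var_bound[OF assms(1) ws b smb]) (auto simp: v_def)
    also have "(\<Sum>s\<in>{1..n}. \<bar>v s\<bar>) = (real n)\<^sup>2 / real (n + k)" unfolding v_def by (rule sum_v[OF kn])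
    finally show ?thesis .
  qed
  have EA: "integral\<^sup>L M (\<lambda>\<omega>. (A \<omega>)\<^sup>2) \<le> real k * Sa"
  proof -
    have "integral\<^sup>L M (\<lambda>\<omega>. (A \<omega>)\<^sup>2) \<le> (\<Sum>s\<in>{1..n}. \<bar>ia s\<bar>) * Sa"
      unfolding A_def Sa_def by (rule var_bound[OF assms(1) ws a sma]) (auto simp: ia_def)
    also have "(\<Sum>s\<in>{1..n}. \<bar>ia s\<bar>) = real k" unfolding ia_def by (rule sum_ia[OF kn])
    finally show ?thesis .
  qed
  have EB: "integral\<^sup>L M (\<lambda>\<omega>. (B \<omega>)\<^sup>2) \<le> real k * Sb"
  proof -
    have "integral\<^sup>L M (\<lambda>\<omega>. (B \<omega>)\<^sup>2) \<le> (\<Sum>s\<in>{1..n}. \<bar>ib s\<bar>) * Sb"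
      unfolding B_def Sb_def by (rule var_bound[OF assms(1) ws b smb]) (auto simp: ib_def)
    also have "(\<Sum>s\<in>{1..n}. \<bar>ib s\<bar>) = real k" unfolding ib_def by (rule sum_ib[OF kn])
    finally show ?thesis .
  qed
  have c10: "c1 \<ge> 0" unfolding c1_def by simp
  have \<alpha>0: "\<alpha> \<ge> 0" unfolding \<alpha>_def by simp
  have \<beta>0: "\<beta> \<ge> 0" unfolding \<beta>_def by simp
  have ED: "integral\<^sup>L M (\<lambda>\<omega>. \<bar>U \<omega> - V \<omega>\<bar>)
      \<le> c1 * \<alpha> * (sqrt (integral\<^sup>L M (\<lambda>\<omega>. (P \<omega>)\<^sup>2)) * sqrt (integral\<^sup>L M (\<lambda>\<omega>. (Q \<omega>)\<^sup>2)))
        + c1 * \<beta> * (sqrt (integral\<^sup>L M (\<lambda>\<omega>. (A \<omega>)\<^sup>2)) * sqrt (integral\<^sup>L M (\<lambda>\<omega>. (B \<omega>)\<^sup>2)))"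
  proof -
    have "integral\<^sup>L M (\<lambda>\<omega>. \<bar>U \<omega> - V \<omega>\<bar>)
        \<le> integral\<^sup>L M (\<lambda>\<omega>. c1 * \<alpha> * \<bar>P \<omega> * Q \<omega>\<bar> + c1 * \<beta> * \<bar>A \<omega> * B \<omega>\<bar>)"
    proof (rule integral_mono)
      show "integrable M (\<lambda>\<omega>. \<bar>U \<omega> - V \<omega>\<bar>)" using intD by auto
      show "integrable M (\<lambda>\<omega>. c1 * \<alpha> * \<bar>P \<omega> * Q \<omega>\<bar> + c1 * \<beta> * \<bar>A \<omega> * B \<omega>\<bar>)"
        using intPQ intAB by auto
      fix \<omega>
      have "\<bar>U \<omega> - V \<omega>\<bar> = c1 * \<bar>(- \<alpha>) * (P \<omega> * Q \<omega>) + \<beta> * (A \<omega> * B \<omega>)\<bar>"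
        unfolding diff' using c10 by (simp add: abs_mult)
      also have "\<dots> \<le> c1 * (\<bar>(- \<alpha>) * (P \<omega> * Q \<omega>)\<bar> + \<bar>\<beta> * (A \<omega> * B \<omega>)\<bar>)"
        using c10 by (intro mult_left_mono abs_triangle_ineq) auto
      also have "\<dots> = c1 * \<alpha> * \<bar>P \<omega> * Q \<omega>\<bar> + c1 * \<beta> * \<bar>A \<omega> * B \<omega>\<bar>"
        using \<alpha>0 \<beta>0 by (simp add: abs_mult algebra_simps)
      finally show "\<bar>U \<omega> - V \<omega>\<bar> \<le> c1 * \<alpha> * \<bar>P \<omega> * Q \<omega>\<bar> + c1 * \<beta> * \<bar>A \<omega> * B \<omega>\<bar>" .
    qed
    also have "\<dots> = c1 * \<alpha> * integral\<^sup>L M (\<lambda>\<omega>. \<bar>P \<omega> * Q \<omega>\<bar>) + c1 * \<beta> * integral\<^sup>L M (\<lambda>\<omega>. \<bar>A \<omega> * B \<omega>\<bar>)"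
      using intPQ intAB by simp
    also have "\<dots> \<le> c1 * \<alpha> * (sqrt (integral\<^sup>L M (\<lambda>\<omega>. (P \<omega>)\<^sup>2)) * sqrt (integral\<^sup>L M (\<lambda>\<omega>. (Q \<omega>)\<^sup>2)))
        + c1 * \<beta> * (sqrt (integral\<^sup>L M (\<lambda>\<omega>. (A \<omega>)\<^sup>2)) * sqrt (integral\<^sup>L M (\<lambda>\<omega>. (B \<omega>)\<^sup>2)))"
      using c10 \<alpha>0 \<beta>0 by (intro add_mono mult_left_mono sqi_CS sP sQ sA sB) auto
    finally show ?thesis .
  qed
  have bound: "integral\<^sup>L M (\<lambda>\<omega>. \<bar>U \<omega> - V \<omega>\<bar>) \<le> 1 / sqrt (real n) * sqrt Sa * sqrt Sb
      + real k / real n powr (3/2) * sqrt (Sa + 1 / real n * Ta) * sqrt (Sb + 1 / real n * Tb)"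
    by (rule final_arith[OF kn Sa0 Sb0 Ta0 Tb0 _ _ _ _ EP EQ EA EB ED[unfolded c1_def \<alpha>_def \<beta>_def]]) auto
  show ?thesis
    unfolding wasserstein_def U_def[symmetric] V_def[symmetric]
  proof (rule SUP_least)
    fix h assume "h \<in> {h :: real \<Rightarrow> real. 1-lipschitz_on UNIV h}"
    then have L: "1-lipschitz_on UNIV h" by simp
    have hm: "h \<in> borel_measurable borel"
      by (rule borel_measurable_continuous_onI[OF lipschitz_on_continuous_on[OF L]])
    have hl: "\<bar>h x - h y\<bar> \<le> \<bar>x - y\<bar>" for x y
      using lipschitz_onD[OF L, of x y] by (simp add: dist_real_def)
    have hUm: "(\<lambda>\<omega>. h (U \<omega>)) \<in> borel_measurable M" by (rule measurable_compose[OF Um hm])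
    have hVm: "(\<lambda>\<omega>. h (V \<omega>)) \<in> borel_measurable M" by (rule measurable_compose[OF Vm hm])
    have iU: "integrable M (\<lambda>\<omega>. h (U \<omega>))"
    proof (rule Bochner_Integration.integrable_bound[OF _ hUm])
      show "integrable M (\<lambda>\<omega>. \<bar>h 0\<bar> + \<bar>U \<omega>\<bar>)" using intU by auto
      show "AE \<omega> in M. norm (h (U \<omega>)) \<le> norm (\<bar>h 0\<bar> + \<bar>U \<omega>\<bar>)"
        using hl[of "U _" 0] by (intro AE_I2) (simp, smt (verit))
    qed
    have iV: "integrable M (\<lambda>\<omega>. h (V \<omega>))"
    proof (rule Bochner_Integration.integrable_bound[OF _ hVm])
      show "integrable M (\<lambda>\<omega>. \<bar>h 0\<bar> + \<bar>V \<omega>\<bar>)" using intV by auto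
      show "AE \<omega> in M. norm (h (V \<omega>)) \<le> norm (\<bar>h 0\<bar> + \<bar>V \<omega>\<bar>)"
        using hl[of "V _" 0] by (intro AE_I2) (simp, smt (verit))
    qed
    have "\<bar>integral\<^sup>L (distr M borel U) h - integral\<^sup>L (distr M borel V) h\<bar>
        = \<bar>integral\<^sup>L M (\<lambda>\<omega>. h (U \<omega>)) - integral\<^sup>L M (\<lambda>\<omega>. h (V \<omega>))\<bar>"
      by (simp add: integral_distr[OF Um hm] integral_distr[OF Vm hm])
    also have "\<dots> = \<bar>integral\<^sup>L M (\<lambda>\<omega>. h (U \<omega>) - h (V \<omega>))\<bar>" using iU iV by simp
    also have "\<dots> \<le> integral\<^sup>L M (\<lambda>\<omega>. \<bar>h (U \<omega>) - h (V \<omega>)\<bar>)"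
      by (rule integral_abs_bound)
    also have "\<dots> \<le> integral\<^sup>L M (\<lambda>\<omega>. \<bar>U \<omega> - V \<omega>\<bar>)"
      using iU iV intD hl by (intro integral_mono) auto
    also have "\<dots> \<le> 1 / sqrt (real n) * sqrt Sa * sqrt Sb
      + real k / real n powr (3/2) * sqrt (Sa + 1 / real n * Ta) * sqrt (Sb + 1 / real n * Tb)"
      by (rule bound)
    finally show "ereal \<bar>integral\<^sup>L (distr M borel U) h - integral\<^sup>L (distr M borel V) h\<bar>
        \<le> ereal (1 / sqrt (real n) * sqrt (\<Sum>\<^sub>\<infinity>u. \<bar>acov M X a a u\<bar>) * sqrt (\<Sum>\<^sub>\<infinity>u. \<bar>acov M X b b u\<bar>)
      + real k / real n powr (3/2)
        * sqrt ((\<Sum>\<^sub>\<infinity>u. \<bar>acov M X a a u\<bar>) + 1 / real n * (\<Sum>\<^sub>\<infinity>u. \<bar>real_of_int u\<bar> * \<bar>acov M X a a u\<bar>))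
        * sqrt ((\<Sum>\<^sub>\<infinity>u. \<bar>acov M X b b u\<bar>) + 1 / real n * (\<Sum>\<^sub>\<infinity>u. \<bar>real_of_int u\<bar> * \<bar>acov M X b b u\<bar>)))"
      unfolding Sa_def Sb_def Ta_def Tb_def by simp
  qed
qed

end
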